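(* $$\sigma(3,3)+3\sigma(2,4)=15\lambda(6)-8\lambda(3)^2.$$
   Context: For integers $t\geq 1$, $n\geq 1$ let $S_n^{(t)}=\sum_{k=1}^{n}\frac{1}{(2k-1)^t}$, and for integers $s\geq 2$, $t\geq 1$ let $\sigma(s,t)=\sum_{n\geq 1}\frac{S_n^{(t)}}{n^s}$. For real $s>1$, $\lambda(s)=\sum_{n\geq 1}\frac{1}{(2n-1)^s}$. *)

theory Defs
  imports "HOL-Analysis.Analysis"
begin

definition oddS :: "nat \<Rightarrow> nat \<Rightarrow> real" where
  "oddS t n = (\<Sum>k=1..n. 1 / (2 * real k - 1) ^ t)"

definition sigma :: "nat \<Rightarrow> nat \<Rightarrow> real" where
  "sigma s t = (\<Sum>n. oddS t (n + 1) / real (n + 1) ^ s)"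

definition dlambda :: "real \<Rightarrow> real" where
  "dlambda s = (\<Sum>n. 1 / (2 * real n + 1) powr s)"

end

theory Submission
  imports Defs "HOL-Real_Asymp.Real_Asymp"
begin


definition PP :: "(nat \<times> nat) set" where "PP = Sigma UNIV (\<lambda>n. {..n})"

lemma summable_inv_sq: "(\<lambda>k::nat. 1 / real (k+1)^2) summable_on UNIV"
proof -
  have "summable (\<lambda>n. inverse (real n ^ 2))"
    using inverse_power_summable[of 2, where 'a=real] by simp
  then have "summable (\<lambda>k. inverse (real (Suc k) ^ 2))"
    by (subst summable_Suc_iff)
  then have "summable (\<lambda>k::nat. 1 / real (k+1)^2)"
    by (simp add: inverse_eq_divide)
  then show ?thesis by (subst summable_on_UNIV_nonneg_real_iff) auto
qed

lemma summable_PP_bound: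
  fixes f :: "nat \<times> nat \<Rightarrow> real"
  assumes "\<And>n k. k \<le> n \<Longrightarrow> \<bar>f (n,k)\<bar> \<le> C / (real (n+1)^2 * real (k+1)^2)"
  shows "f summable_on PP"
proof -
  define S where "S = infsum (\<lambda>k::nat. 1/real(k+1)^2) UNIV"
  define g where "g = (\<lambda>(n::nat,k::nat). \<bar>C\<bar> * (1 / real (n+1)^2) * (1/ real (k+1)^2))"
  have "g summable_on Sigma UNIV (\<lambda>_. UNIV)"
  proof (rule summable_on_SigmaI[where g = "\<lambda>n. \<bar>C\<bar> * (1/real(n+1)^2) * S"])
    fix n :: nat
    show "((\<lambda>k. g (n, k)) has_sum \<bar>C\<bar> * (1 / real (n + 1)^2) * S) UNIV"
    proof -
      have e: "(\<lambda>k. g (n,k)) = (\<lambda>k. (\<bar>C\<bar> * (1/real(n+1)^2)) * (1/real(k+1)^2))"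
        by (simp add: g_def)
      show ?thesis unfolding e S_def
        by (rule has_sum_cmult_right[OF has_sum_infsum[OF summable_inv_sq]])
    qed
  next
    show "(\<lambda>n. \<bar>C\<bar> * (1 / real (n + 1)^2) * S) summable_on UNIV"
      by (intro summable_on_cmult_left summable_on_cmult_right summable_inv_sq)
  qed (auto simp: g_def)
  then have g: "g summable_on PP"
    by (rule summable_on_subset_banach) (auto simp: PP_def)
  have "(\<lambda>x. norm (g x)) summable_on PP"
    using g by (rule summable_on_cong[THEN iffD1, rotated]) (auto simp: g_def)
  then have "(\<lambda>x. norm (f x)) summable_on PP"
  proof (rule Infinite_Sum.abs_summable_on_comparison_test)
    fix x assume "x \<in> PP"
    then obtain n k where x: "x = (n,k)" "k \<le> n" by (auto simp: PP_def)
    have "\<bar>f (n,k)\<bar> \<le> C / (real (n+1)^2 * real (k+1)^2)" using assms x by auto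
    also have "\<dots> \<le> \<bar>C\<bar> / (real (n+1)^2 * real (k+1)^2)"
      by (intro divide_right_mono) auto
    finally show "norm (f x) \<le> norm (g x)" using x by (simp add: g_def)
  qed
  then show ?thesis by (rule abs_summable_summable)
qed

lemma PP_sums:
  fixes f :: "nat \<times> nat \<Rightarrow> real"
  assumes "f summable_on PP"
  shows "(\<lambda>n. \<Sum>k\<le>n. f (n,k)) sums infsum f PP"
proof -
  have fin: "(\<lambda>k. f (n,k)) summable_on {..n}" for n by simp
  have "(\<lambda>n. infsum (\<lambda>k. f (n,k)) {..n}) summable_on UNIV"
    using summable_on_SigmaD[OF assms[unfolded PP_def] fin] by simp
  then have "((\<lambda>n. infsum (\<lambda>k. f (n,k)) {..n}) has_sum infsum (\<lambda>n. infsum (\<lambda>k. f (n,k)) {..n}) UNIV) UNIV"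
    by (rule has_sum_infsum)
  also have "infsum (\<lambda>n. infsum (\<lambda>k. f (n,k)) {..n}) UNIV = infsum f PP"
    unfolding PP_def by (rule infsum_Sigma_banach) (use assms in \<open>simp add: PP_def\<close>)
  finally show ?thesis by (auto dest: has_sum_imp_sums)
qed

lemma PP_swap_has_sum:
  fixes f :: "nat \<times> nat \<Rightarrow> real"
  assumes "(f has_sum S) PP"
    and "\<And>k. ((\<lambda>n. f (n,k)) has_sum g k) {k..}"
  shows "(g has_sum S) UNIV"
proof -
  define Q where "Q = Sigma (UNIV::nat set) (\<lambda>k. {k..})"
  have PQ: "PP = (\<lambda>(k,n). (n,k)) ` Q" unfolding PP_def Q_def by auto
  have inj: "inj_on (\<lambda>(k::nat,n::nat). (n,k)) Q" by (auto simp: inj_on_def)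
  have "((f \<circ> (\<lambda>(k,n). (n,k))) has_sum S) Q"
    using assms(1) unfolding PQ by (subst (asm) has_sum_reindex[OF inj])
  then have "((\<lambda>(k,n). f (n,k)) has_sum S) Q" by (simp add: o_def case_prod_unfold)
  then show ?thesis unfolding Q_def
    by (rule has_sum_Sigma') (use assms(2) in auto)
qed



lemma reflect_zero: "(\<Sum>i\<le>2*k. 1 / (real i - real k)) = 0"
proof -
  have "(\<Sum>i\<le>2*k. 1 / (real i - real k)) = (\<Sum>i\<in>{0..2*k}. 1 / (real i - real k))"
    by (simp add: atMost_atLeast0)
  also have "\<dots> = (\<Sum>i\<in>{0..2*k}. 1 / (real (2*k + 0 - i) - real k))"
    by (rule sum.atLeastAtMost_rev)
  also have "\<dots> = (\<Sum>i\<in>{0..2*k}. - (1 / (real i - real k)))"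
  proof (rule sum.cong)
    fix i assume "i \<in> {0..2*k}"
    then have e: "real (2*k + 0 - i) - real k = - (real i - real k)" by (simp add: of_nat_diff)
    show "1 / (real (2*k + 0 - i) - real k) = - (1 / (real i - real k))"
      unfolding e by (rule divide_minus_right)
  qed simp
  also have "\<dots> = - (\<Sum>i\<le>2*k. 1 / (real i - real k))"
    by (simp add: sum_negf atMost_atLeast0)
  finally show ?thesis by simp
qed

lemma tele0: "(\<lambda>j. 1/(real j - real k) - 1/(real j + real k + 1)) sums 0"
proof -
  define v where "v i j = 1/(real (j+i) - real k)" for i j :: nat
  have each: "(\<lambda>j. v i j - v i (Suc j)) sums (v i 0 - 0)" for i
    by (rule telescope_sums') (unfold v_def, real_asymp)
  have "(\<lambda>j. \<Sum>i<2*k+1. (v i j - v i (Suc j))) sums (\<Sum>i<2*k+1. (v i 0 - 0))"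
    by (rule sums_sum) (rule each)
  moreover have "(\<Sum>i<2*k+1. (v i j - v i (Suc j))) = 1/(real j - real k) - 1/(real j + real k + 1)" for j
  proof -
    have "(\<Sum>i<2*k+1. (v i j - v i (Suc j))) = (\<Sum>i<2*k+1. (v i j - v (Suc i) j))"
      by (simp add: v_def)
    also have "\<dots> = v 0 j - v (2*k+1) j" by (rule sum_lessThan_telescope')
    also have "v 0 j = 1/(real j - real k)" by (simp add: v_def)
    also have "v (2*k+1) j = 1/(real j + real k + 1)" by (simp add: v_def)
    finally show ?thesis .
  qed
  moreover have "(\<Sum>i<2*k+1. (v i 0 - 0)) = 0"
    using reflect_zero[of k] by (simp add: v_def lessThan_Suc_atMost[symmetric])
  ultimately show ?thesis by simp
qed



lemma nat_i:
  fixes n k s t :: nat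
  assumes "k \<le> n" "2 \<le> s" "2 \<le> t \<or> 4 \<le> s"
  shows "(n+1)^2*(k+1)^2 \<le> (n+1)^s*(2*k+1)^t"
  using assms(3)
proof
  assume t: "2 \<le> t"
  have "(n+1)^2 \<le> (n+1)^s" using assms(2) by (intro power_increasing) auto
  moreover have "(k+1)^2 \<le> (2*k+1)^t"
  proof -
    have "(k+1)^2 \<le> (2*k+1)^2" by (intro power_mono) auto
    also have "\<dots> \<le> (2*k+1)^t" using t by (intro power_increasing) auto
    finally show ?thesis .
  qed
  ultimately show ?thesis by (rule mult_le_mono)
next
  assume s: "4 \<le> s"
  have "(n+1)^2*(k+1)^2 \<le> (n+1)^2*(n+1)^2" using assms(1) by (intro mult_le_mono power_mono) auto
  also have "\<dots> = (n+1)^4" by (simp add: power_add[symmetric])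
  also have "\<dots> \<le> (n+1)^s" using s by (intro power_increasing) auto
  also have "\<dots> \<le> (n+1)^s*(2*k+1)^t" by simp
  finally show ?thesis .
qed

lemma nat_ii:
  fixes n k d :: nat
  assumes "k \<le> n" "1 \<le> d"
  shows "(n+1)^2*(k+1)^2 \<le> (n+1)^5*d"
proof -
  have "(n+1)^2*(k+1)^2 \<le> (n+1)^2*(n+1)^2" using assms(1) by (intro mult_le_mono power_mono) auto
  also have "\<dots> = (n+1)^4" by (simp add: power_add[symmetric])
  also have "\<dots> \<le> (n+1)^5" by (intro power_increasing) auto
  also have "\<dots> \<le> (n+1)^5*d" using assms(2) by simp
  finally show ?thesis .
qed

lemma nat_iii:
  fixes n k d :: nat
  assumes "1 \<le> d" "n \<le> 4*k+1 \<or> d = n - 2*k"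
  shows "(n+1)*(k+1)^2 \<le> 2*(2*k+1)^4*d"
proof -
  have a: "n+1 \<le> 2*(2*k+1)*d"
    using assms(2)
  proof
    assume "n \<le> 4*k+1"
    then have "n+1 \<le> 2*(2*k+1)" by simp
    also have "\<dots> \<le> 2*(2*k+1)*d" using mult_le_mono2[OF assms(1), of "2*(2*k+1)"] by simp
    finally show ?thesis .
  next
    assume "d = n - 2*k"
    then have "n+1 \<le> 2*d \<or> n+1 \<le> 2*(2*k+1)" by arith
    moreover have "2*d \<le> 2*(2*k+1)*d" by simp
    moreover have "2*(2*k+1) \<le> 2*(2*k+1)*d" using mult_le_mono2[OF assms(1), of "2*(2*k+1)"] by simp
    ultimately show ?thesis by linarith
  qed
  have b: "(k+1)^2 \<le> (2*k+1)^3"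
  proof -
    have "(k+1)^2 \<le> (2*k+1)^2" by (intro power_mono) auto
    also have "\<dots> \<le> (2*k+1)^3" by (intro power_increasing) auto
    finally show ?thesis .
  qed
  have "(n+1)*(k+1)^2 \<le> (2*(2*k+1)*d)*(2*k+1)^3" using a b by (rule mult_le_mono)
  also have "\<dots> = 2*(2*k+1)^4*d" by (simp add: algebra_simps eval_nat_numeral)
  finally show ?thesis .
qed



definition FF :: "nat \<Rightarrow> nat \<Rightarrow> nat \<times> nat \<Rightarrow> real" where
  "FF s t = (\<lambda>(n,k). 1 / (real (n+1)^s * real (2*k+1)^t))"
definition G2 :: "nat \<times> nat \<Rightarrow> real" where
  "G2 = (\<lambda>(n,k). 1 / (real (n+1)^5 * (real n - 2*real k)))"
definition WW :: "nat \<times> nat \<Rightarrow> real" where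
  "WW = (\<lambda>(n,k). (1/real(2*k+1)^5) * (1/(real n - 2*real k) - 1/(real n + 1)))"
definition EE :: "real \<Rightarrow> nat \<times> nat \<Rightarrow> real" where
  "EE c = (\<lambda>(n,k). if n = 2*k then c / real (2*k+1)^6 else 0)"

lemma sumform1:
  fixes N m :: real
  assumes "N > 0" "m > 0" "N \<noteq> m"
  shows "1/(N^2*m^4) + 1/(N^3*m^3) + 1/(N^4*m^2) + 1/(N^5*m) = 1/(m^4*N*(N-m)) - 1/(N^5*(N-m))"
proof -
  have "N - m \<noteq> 0" using assms by simp
  then show ?thesis using assms by (simp add: divide_simps) (simp add: algebra_simps eval_nat_numeral)
qed

lemma ww_alg:
  fixes N m :: real
  assumes "N > 0" "m > 0" "N \<noteq> m"
  shows "1/(m^4*N*(N-m)) = 1/m^5 * (1/(N-m) - 1/N)"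
  using assms by (simp add: field_simps eval_nat_numeral)

lemma recip_mono:
  fixes A B c :: real
  assumes "0 < A" "A \<le> B" "0 \<le> c"
  shows "c / B \<le> c / A"
  using assms by (intro divide_left_mono) auto

lemma bound_FF:
  assumes "k \<le> n" "2 \<le> s" "2 \<le> t \<or> 4 \<le> s"
  shows "\<bar>FF s t (n,k)\<bar> \<le> 1 / (real (n+1)^2 * real (k+1)^2)"
proof -
  have "real ((n+1)^2*(k+1)^2) \<le> real ((n+1)^s*(2*k+1)^t)"
    using nat_i[OF assms] by (simp only: of_nat_le_iff)
  then have le: "real (n+1)^2*real (k+1)^2 \<le> real (n+1)^s*real (2*k+1)^t"
    by (simp only: of_nat_mult of_nat_power)
  have "\<bar>FF s t (n,k)\<bar> = 1 / (real (n+1)^s*real (2*k+1)^t)" by (simp add: FF_def)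
  also have "\<dots> \<le> 1 / (real (n+1)^2 * real (k+1)^2)"
    by (rule recip_mono[OF _ le]) (auto simp del: of_nat_Suc of_nat_add)
  finally show ?thesis .
qed

lemma dist_nat:
  fixes n k :: nat
  obtains d :: nat where "real d = \<bar>real n - 2*real k\<bar>" "n \<noteq> 2*k \<Longrightarrow> 1 \<le> d"
    "n \<le> 4*k+1 \<or> d = n - 2*k"
proof -
  define d where "d = (if 2*k \<le> n then n - 2*k else 2*k - n)"
  have "real d = \<bar>real n - 2*real k\<bar>" by (auto simp: d_def of_nat_diff)
  moreover have "n \<noteq> 2*k \<Longrightarrow> 1 \<le> d" by (auto simp: d_def)
  moreover have "n \<le> 4*k+1 \<or> d = n - 2*k" by (auto simp: d_def)
  ultimately show ?thesis using that by blast
qed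

lemma bound_G2:
  assumes "k \<le> n"
  shows "\<bar>G2 (n,k)\<bar> \<le> 1 / (real (n+1)^2 * real (k+1)^2)"
proof (cases "n = 2*k")
  case True
  then show ?thesis by (simp add: G2_def)
next
  case False
  obtain d :: nat where d: "real d = \<bar>real n - 2*real k\<bar>" "1 \<le> d"
    using dist_nat[of n k] False by metis
  have "real ((n+1)^2*(k+1)^2) \<le> real ((n+1)^5*d)"
    using nat_ii[OF assms d(2)] by (simp only: of_nat_le_iff)
  then have le: "real (n+1)^2*real (k+1)^2 \<le> real (n+1)^5*real d"
    by (simp only: of_nat_mult of_nat_power)
  have "\<bar>G2 (n,k)\<bar> = 1 / (real (n+1)^5*real d)" by (simp add: G2_def d(1) abs_mult)
  also have "\<dots> \<le> 1 / (real (n+1)^2 * real (k+1)^2)"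
    by (rule recip_mono[OF _ le]) (auto simp del: of_nat_Suc of_nat_add)
  finally show ?thesis .
qed

lemma bound_EE:
  assumes "k \<le> n"
  shows "\<bar>EE c (n,k)\<bar> \<le> \<bar>c\<bar> / (real (n+1)^2 * real (k+1)^2)"
proof (cases "n = 2*k")
  case True
  have "(k+1)^2 \<le> (2*k+1)^2" by (intro power_mono) auto
  also have "\<dots> \<le> (2*k+1)^4" by (intro power_increasing) auto
  finally have "(2*k+1)^2*(k+1)^2 \<le> (2*k+1)^2*(2*k+1)^4" by (rule mult_le_mono2)
  also have "\<dots> = (2*k+1)^6" by (simp add: power_add[symmetric])
  finally have "real ((2*k+1)^2*(k+1)^2) \<le> real ((2*k+1)^6)" by (simp only: of_nat_le_iff)
  then have le: "real (n+1)^2*real (k+1)^2 \<le> real (2*k+1)^6"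
    using True by (simp only: of_nat_mult of_nat_power)
  have "\<bar>EE c (n,k)\<bar> = \<bar>c\<bar> / real (2*k+1)^6" using True by (simp add: EE_def)
  also have "\<dots> \<le> \<bar>c\<bar> / (real (n+1)^2 * real (k+1)^2)"
    by (rule recip_mono[OF _ le]) (auto simp del: of_nat_Suc of_nat_add)
  finally show ?thesis .
next
  case False
  then show ?thesis by (simp add: EE_def)
qed

lemma bound_WW:
  assumes "k \<le> n"
  shows "\<bar>WW (n,k)\<bar> \<le> 2 / (real (n+1)^2 * real (k+1)^2)"
proof (cases "n = 2*k")
  case True
  define m where "m = real (2*k+1)"
  have e1: "real n - 2*real k = 0" "real n + 1 = m" using True by (simp_all add: m_def)
  have "m > 0" by (simp add: m_def)
  have "WW (n,k) = 1/m^5 * (1/0 - 1/m)" unfolding WW_def by (simp only: case_prod_conv e1 m_def[symmetric])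
  also have "\<dots> = - (1/m^6)" using \<open>m > 0\<close> by (simp add: field_simps eval_nat_numeral)
  finally have "\<bar>WW (n,k)\<bar> = \<bar>EE 1 (n,k)\<bar>" using True by (simp add: EE_def m_def)
  also have "\<dots> \<le> 1 / (real (n+1)^2 * real (k+1)^2)" using bound_EE[OF assms, of 1] by simp
  also have "\<dots> \<le> 2 / (real (n+1)^2 * real (k+1)^2)" by (intro divide_right_mono) auto
  finally show ?thesis .
next
  case False
  obtain d :: nat where d: "real d = \<bar>real n - 2*real k\<bar>" "1 \<le> d" "n \<le> 4*k+1 \<or> d = n - 2*k"
    using dist_nat[of n k] False by metis
  have "(n+1)*((n+1)*(k+1)^2) \<le> (n+1)*(2*(2*k+1)^4*d)"
    by (rule mult_le_mono2[OF nat_iii[OF d(2,3)]])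
  then have "real ((n+1)*((n+1)*(k+1)^2)) \<le> real ((n+1)*(2*(2*k+1)^4*d))" by (simp only: of_nat_le_iff)
  then have le: "real (n+1)^2*real (k+1)^2 \<le> 2 * (real (2*k+1)^4 * real (n+1) * real d)"
    by (simp only: of_nat_mult of_nat_power power2_eq_square of_nat_numeral) (simp add: algebra_simps)
  have x: "real n - 2*real k \<noteq> 0" using False by linarith
  have "WW (n,k) = 1 / (real (2*k+1)^4 * real (n+1) * (real n - 2*real k))"
  proof -
    define N where "N = real n + 1"
    define m where "m = 2 * real k + 1"
    have N: "real (n+1) = N" and m: "real (2*k+1) = m" by (simp_all add: N_def m_def)
    have r: "real n - 2 * real k = N - m" unfolding N_def m_def by simp
    have r2: "real n + 1 = N" unfolding N_def by simp
    have pos: "N > 0" "m > 0" "N \<noteq> m" using x unfolding N_def m_def by auto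
    show ?thesis unfolding WW_def using ww_alg[OF pos]
      by (simp only: case_prod_conv N m r r2)
  qed
  then have "\<bar>WW (n,k)\<bar> = 1 / (real (2*k+1)^4 * real (n+1) * real d)"
    by (simp add: d(1) abs_mult)
  also have "\<dots> = 2 / (2 * (real (2*k+1)^4 * real (n+1) * real d))" by simp
  also have "\<dots> \<le> 2 / (real (n+1)^2 * real (k+1)^2)"
    by (rule recip_mono[OF _ le]) (auto simp del: of_nat_Suc of_nat_add)
  finally show ?thesis .
qed

lemma pointwise_sum:
  "FF 2 4 x + FF 3 3 x + FF 4 2 x + FF 5 1 x = WW x + EE 5 x - G2 x"
proof -
  obtain n k where x: "x = (n,k)" by (cases x)
  define N where "N = real n + 1"
  define m where "m = 2 * real k + 1"
  have N: "real (n+1) = N" and m: "real (2*k+1) = m" by (simp_all add: N_def m_def)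
  have pos: "N > 0" "m > 0" by (simp_all add: N_def m_def)
  show ?thesis
  proof (cases "n = 2*k")
    case True
    then have Nm: "N = m" unfolding N_def m_def by simp
    have r: "real n - 2 * real k = 0" using True by simp
    have r2: "real n + 1 = m" using Nm unfolding N_def by simp
    have N': "real (n+1) = m" using N Nm by simp
    show ?thesis unfolding x FF_def WW_def EE_def G2_def
      apply (simp only: case_prod_conv N' m r r2 if_P[OF True])
      using pos by (simp add: field_simps eval_nat_numeral)
  next
    case False
    have Nm: "N \<noteq> m" using False unfolding N_def m_def by simp
    have r: "real n - 2 * real k = N - m" unfolding N_def m_def by simp
    have r2: "real n + 1 = N" unfolding N_def by simp
    have "1/(N^2*m^4) + 1/(N^3*m^3) + 1/(N^4*m^2) + 1/(N^5*m) = 1/(m^4*N*(N-m)) - 1/(N^5*(N-m))"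
      by (rule sumform1[OF pos Nm])
    moreover have "1/(m^4*N*(N-m)) = 1/m^5 * (1/(N-m) - 1/N)"
      using pos Nm by (simp add: field_simps eval_nat_numeral)
    ultimately show ?thesis unfolding x FF_def WW_def EE_def G2_def using False
      by (simp only: case_prod_conv N m r r2 if_not_P[OF False]) (simp add: field_simps)
  qed
qed



lemma summable_FF:
  assumes "2 \<le> s" "2 \<le> t \<or> 4 \<le> s"
  shows "FF s t summable_on PP"
  by (rule summable_PP_bound[where C=1]) (rule bound_FF[OF _ assms])

lemma summable_G2: "G2 summable_on PP"
  by (rule summable_PP_bound[where C=1]) (rule bound_G2)

lemma summable_WW: "WW summable_on PP"
  by (rule summable_PP_bound[where C=2]) (rule bound_WW)

lemma summable_EE: "EE c summable_on PP"
  by (rule summable_PP_bound[where C="\<bar>c\<bar>"]) (rule bound_EE)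

lemma oddS_eq: "oddS t (n+1) / real (n+1)^s = (\<Sum>k\<le>n. FF s t (n,k))"
proof -
  have "oddS t (n+1) = (\<Sum>k\<in>{Suc 0..Suc n}. 1 / (2 * real k - 1) ^ t)"
    by (simp add: oddS_def)
  also have "\<dots> = (\<Sum>k\<in>{0..n}. 1 / (2 * real (Suc k) - 1) ^ t)"
    by (rule sum.shift_bounds_cl_Suc_ivl)
  also have "\<dots> = (\<Sum>k\<le>n. 1 / real (2*k+1) ^ t)"
    by (simp add: atMost_atLeast0 algebra_simps)
  finally show ?thesis by (simp add: sum_divide_distrib FF_def ac_simps)
qed

lemma sigma_eq:
  assumes "2 \<le> s" "2 \<le> t \<or> 4 \<le> s"
  shows "sigma s t = infsum (FF s t) PP"
proof -
  have "(\<lambda>n. \<Sum>k\<le>n. FF s t (n,k)) sums infsum (FF s t) PP"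
    by (rule PP_sums[OF summable_FF[OF assms]])
  then show ?thesis unfolding sigma_def oddS_eq by (rule sums_unique[symmetric])
qed

lemma slice_summable:
  fixes f :: "nat \<times> nat \<Rightarrow> real"
  assumes "f summable_on PP"
  shows "(\<lambda>n. f (n,k)) summable_on {k..}"
proof -
  define Q where "Q = Sigma (UNIV::nat set) (\<lambda>k. {k..})"
  have PQ: "PP = (\<lambda>(k,n). (n,k)) ` Q" unfolding PP_def Q_def by auto
  have inj: "inj_on (\<lambda>(k::nat,n::nat). (n,k)) Q" by (auto simp: inj_on_def)
  have "(f \<circ> (\<lambda>(k,n). (n,k))) summable_on Q"
    using assms unfolding PQ by (subst (asm) summable_on_reindex[OF inj])
  then have "(\<lambda>(k,n). f (n,k)) summable_on Q" by (simp add: o_def case_prod_unfold)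
  then show ?thesis unfolding Q_def by (rule summable_on_SigmaD1) simp
qed

lemma G2_inner: "(\<Sum>k\<le>n. G2 (n,k)) = 0"
proof -
  have e: "G2 (n,k) = 1 / real (n+1)^5 * (1 / (real n - 2 * real k))" for k
    by (simp add: G2_def)
  have "(\<Sum>k\<le>n. 1 / (real n - 2 * real k)) = (\<Sum>k\<in>{0..n}. 1 / (real n - 2 * real k))"
    by (simp add: atMost_atLeast0)
  also have "\<dots> = (\<Sum>k\<in>{0..n}. 1 / (real n - 2 * real (n + 0 - k)))"
    by (rule sum.atLeastAtMost_rev)
  also have "\<dots> = (\<Sum>k\<in>{0..n}. - (1 / (real n - 2 * real k)))"
  proof (rule sum.cong)
    fix k assume "k \<in> {0..n}"
    then have e: "real n - 2 * real (n + 0 - k) = - (real n - 2 * real k)" by (simp add: of_nat_diff)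
    show "1 / (real n - 2 * real (n + 0 - k)) = - (1 / (real n - 2 * real k))"
      unfolding e by (rule divide_minus_right)
  qed simp
  also have "\<dots> = - (\<Sum>k\<le>n. 1 / (real n - 2 * real k))"
    by (simp add: sum_negf atMost_atLeast0)
  finally have "(\<Sum>k\<le>n. 1 / (real n - 2 * real k)) = 0" by simp
  moreover have "(\<Sum>k\<le>n. G2 (n,k)) = 1 / real (n+1)^5 * (\<Sum>k\<le>n. 1 / (real n - 2 * real k))"
    by (simp only: e sum_distrib_left)
  ultimately show ?thesis by simp
qed

lemma G2_sum: "infsum G2 PP = 0"
proof -
  have "(\<lambda>n. \<Sum>k\<le>n. G2 (n,k)) sums infsum G2 PP" by (rule PP_sums[OF summable_G2])
  then show ?thesis unfolding G2_inner by (simp add: sums_0 sums_unique2)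
qed

lemma WW_slice: "((\<lambda>n. WW (n,k)) has_sum 0) {k..}"
proof -
  have sm: "(\<lambda>n. WW (n,k)) summable_on {k..}" by (rule slice_summable[OF summable_WW])
  define S where "S = infsum (\<lambda>n. WW (n,k)) {k..}"
  have hs: "((\<lambda>n. WW (n,k)) has_sum S) {k..}" unfolding S_def using sm by (rule has_sum_infsum)
  have img: "{k..} = (\<lambda>j. j + k) ` UNIV"
  proof (intro set_eqI iffI)
    fix x assume "x \<in> {k..}"
    then show "x \<in> (\<lambda>j. j + k) ` UNIV" by (intro image_eqI[where x="x-k"]) auto
  qed auto
  have inj: "inj_on (\<lambda>j::nat. j + k) UNIV" by (auto simp: inj_on_def)
  have "(((\<lambda>n. WW (n,k)) \<circ> (\<lambda>j. j + k)) has_sum S) UNIV"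
    using hs unfolding img by (subst (asm) has_sum_reindex[OF inj])
  then have s1: "(\<lambda>j. WW (j+k,k)) sums S" by (auto dest: has_sum_imp_sums simp: o_def)
  have "(\<lambda>j. 1/real(2*k+1)^5 * (1/(real j - real k) - 1/(real j + real k + 1))) sums (1/real(2*k+1)^5 * 0)"
    by (rule sums_mult[OF tele0])
  moreover have "WW (j+k,k) = 1/real(2*k+1)^5 * (1/(real j - real k) - 1/(real j + real k + 1))" for j
    by (simp add: WW_def algebra_simps)
  ultimately have "(\<lambda>j. WW (j+k,k)) sums 0" by simp
  then have "S = 0" using s1 by (rule sums_unique2[symmetric])
  then show ?thesis using hs by simp
qed

lemma WW_sum: "infsum WW PP = 0"
proof -
  have "(WW has_sum infsum WW PP) PP" using summable_WW by (rule has_sum_infsum)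
  then have "((\<lambda>k::nat. 0::real) has_sum infsum WW PP) UNIV"
    by (rule PP_swap_has_sum[where g="\<lambda>k. 0" and f=WW, OF _ WW_slice])
  then show ?thesis using has_sum_unique[OF _ has_sum_0_simp] by metis
qed

lemma lam_has_sum: "((\<lambda>k. 1 / real (2*k+1)^6) has_sum dlambda 6) UNIV"
proof -
  have e: "dlambda 6 = (\<Sum>k. 1 / real (2*k+1)^6)"
    unfolding dlambda_def by (simp add: algebra_simps)
  have "summable (\<lambda>k. 1 / real (2*k+1)^6)"
  proof (rule summable_comparison_test)
    show "summable (\<lambda>k::nat. 1 / real (k+1)^2)"
      using summable_inv_sq by (subst (asm) summable_on_UNIV_nonneg_real_iff) auto
    show "\<exists>N. \<forall>n\<ge>N. norm (1 / real (2*n+1)^6) \<le> 1 / real (n+1)^2"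
    proof (intro exI allI impI)
      fix n :: nat
      have "(n+1)^2 \<le> (2*n+1)^6"
      proof -
        have "(n+1)^2 \<le> (2*n+1)^2" by (intro power_mono) auto
        also have "\<dots> \<le> (2*n+1)^6" by (intro power_increasing) auto
        finally show ?thesis .
      qed
      then have "real ((n+1)^2) \<le> real ((2*n+1)^6)" by (simp only: of_nat_le_iff)
      then have "real (n+1)^2 \<le> real (2*n+1)^6" by (simp only: of_nat_power)
      then show "norm (1 / real (2*n+1)^6) \<le> 1 / real (n+1)^2"
        by (simp del: of_nat_Suc of_nat_add) (rule recip_mono[where c=1, simplified]; auto)
    qed
  qed
  then show ?thesis unfolding e by (intro sums_nonneg_imp_has_sum summable_sums) auto
qed



lemma EE_slice: "((\<lambda>n. EE c (n,k)) has_sum c / real (2*k+1)^6) {k..}"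
proof -
  have "((\<lambda>n. EE c (n,k)) has_sum c / real (2*k+1)^6) {2*k}"
    by (rule has_sum_finiteI) (simp_all add: EE_def)
  then show ?thesis
    by (subst has_sum_cong_neutral[where T="{2*k}" and g="\<lambda>n. EE c (n,k)"]) (auto simp: EE_def)
qed

lemma EE_sum: "infsum (EE c) PP = c * dlambda 6"
proof -
  have "(EE c has_sum infsum (EE c) PP) PP" using summable_EE by (rule has_sum_infsum)
  then have h1: "((\<lambda>k::nat. c / real (2*k+1)^6) has_sum infsum (EE c) PP) UNIV"
    by (rule PP_swap_has_sum[where g="\<lambda>k. c / real (2*k+1)^6" and f="EE c", OF _ EE_slice])
  have "((\<lambda>k::nat. c * (1 / real (2*k+1)^6)) has_sum c * dlambda 6) UNIV"
    by (rule has_sum_cmult_right[OF lam_has_sum])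
  then have h2: "((\<lambda>k::nat. c / real (2*k+1)^6) has_sum c * dlambda 6) UNIV" by simp
  show ?thesis using has_sum_unique[OF h1 h2] .
qed

lemma partB: "sigma 2 4 + sigma 3 3 + sigma 4 2 + sigma 5 1 = 5 * dlambda 6"
proof -
  have h: "(FF s t has_sum sigma s t) PP" if "2 \<le> s" "2 \<le> t \<or> 4 \<le> s" for s t
    unfolding sigma_eq[OF that] using summable_FF[OF that] by (rule has_sum_infsum)
  have L: "((\<lambda>x. FF 2 4 x + FF 3 3 x + FF 4 2 x + FF 5 1 x) has_sum
      (sigma 2 4 + sigma 3 3 + sigma 4 2 + sigma 5 1)) PP"
    by (intro has_sum_add h) auto
  have hW: "(WW has_sum 0) PP" using has_sum_infsum[OF summable_WW] WW_sum by simp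
  have hE: "(EE 5 has_sum 5 * dlambda 6) PP" using has_sum_infsum[OF summable_EE, of 5] EE_sum by simp
  have hG: "(G2 has_sum 0) PP" using has_sum_infsum[OF summable_G2] G2_sum by simp
  have hG': "((\<lambda>x. - G2 x) has_sum 0) PP" using hG by (simp add: has_sum_uminus)
  have "((\<lambda>x. WW x + EE 5 x + - G2 x) has_sum (0 + 5 * dlambda 6 + 0)) PP"
    by (intro has_sum_add hW hE hG')
  then have R: "((\<lambda>x. FF 2 4 x + FF 3 3 x + FF 4 2 x + FF 5 1 x) has_sum 5 * dlambda 6) PP"
    unfolding pointwise_sum by simp
  show ?thesis using has_sum_unique[OF L R] .
qed



lemma pf3:
  fixes m a N :: real
  assumes "m > 0" "a > 0" "2*N = m + a"
  shows "1/(m^3*a^3) = (3/16*(1/(N^5*m)) + 3/16*(1/(N^4*m^2)) + 1/8*(1/(N^3*m^3)))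
                     + (3/16*(1/(N^5*a)) + 3/16*(1/(N^4*a^2)) + 1/8*(1/(N^3*a^3)))"
proof -
  have a: "a = 2*N - m" using assms by simp
  have "N > 0" using assms by simp
  then show ?thesis using assms unfolding a by (simp add: field_simps) algebra
qed

definition xx :: "nat \<Rightarrow> real" where "xx i = 1 / real (2*i+1)^3"
definition RR :: "nat \<Rightarrow> nat \<Rightarrow> real" where
  "RR n k = 3/16 * FF 5 1 (n,k) + 3/16 * FF 4 2 (n,k) + 1/8 * FF 3 3 (n,k)"

lemma xx_pointwise:
  assumes "k \<le> n"
  shows "xx k * xx (n-k) = RR n k + RR n (n-k)"
proof -
  define m where "m = real (2*k+1)"
  define a where "a = real (2*(n-k)+1)"
  define N where "N = real (n+1)"
  have pos: "m > 0" "a > 0" and sum: "2*N = m + a"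
    using assms by (auto simp: m_def a_def N_def of_nat_diff)
  have "xx k * xx (n-k) = 1/(m^3*a^3)" by (simp add: xx_def m_def a_def)
  also have "\<dots> = (3/16*(1/(N^5*m)) + 3/16*(1/(N^4*m^2)) + 1/8*(1/(N^3*m^3)))
                     + (3/16*(1/(N^5*a)) + 3/16*(1/(N^4*a^2)) + 1/8*(1/(N^3*a^3)))"
    by (rule pf3[OF pos sum])
  also have "\<dots> = RR n k + RR n (n-k)"
    by (simp add: RR_def FF_def m_def a_def N_def)
  finally show ?thesis .
qed

lemma xx_inner: "(\<Sum>i\<le>n. xx i * xx (n-i)) =
   (\<Sum>k\<le>n. 3/8 * FF 5 1 (n,k) + 3/8 * FF 4 2 (n,k) + 1/4 * FF 3 3 (n,k))"
proof -
  have "(\<Sum>i\<le>n. xx i * xx (n-i)) = (\<Sum>i\<le>n. RR n i) + (\<Sum>i\<le>n. RR n (n-i))"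
    by (simp add: xx_pointwise sum.distrib)
  also have "(\<Sum>i\<le>n. RR n (n-i)) = (\<Sum>i\<le>n. RR n i)"
    using sum.atLeastAtMost_rev[of "RR n" 0 n] by (simp add: atMost_atLeast0)
  finally have "(\<Sum>i\<le>n. xx i * xx (n-i)) = 2 * (\<Sum>i\<le>n. RR n i)" by simp
  also have "\<dots> = (\<Sum>i\<le>n. 2 * RR n i)" by (rule sum_distrib_left)
  also have "\<dots> = (\<Sum>k\<le>n. 3/8 * FF 5 1 (n,k) + 3/8 * FF 4 2 (n,k) + 1/4 * FF 3 3 (n,k))"
    by (rule sum.cong) (simp_all add: RR_def)
  finally show ?thesis .
qed

lemma lam_summable_gen:
  assumes "2 \<le> p"
  shows "summable (\<lambda>k. 1 / real (2*k+1)^p)"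
proof (rule summable_comparison_test)
  show "summable (\<lambda>k::nat. 1 / real (k+1)^2)"
    using summable_inv_sq by (subst (asm) summable_on_UNIV_nonneg_real_iff) auto
  show "\<exists>N. \<forall>n\<ge>N. norm (1 / real (2*n+1)^p) \<le> 1 / real (n+1)^2"
  proof (intro exI allI impI)
    fix n :: nat
    have "(n+1)^2 \<le> (2*n+1)^p"
    proof -
      have "(n+1)^2 \<le> (2*n+1)^2" by (intro power_mono) auto
      also have "\<dots> \<le> (2*n+1)^p" using assms by (intro power_increasing) auto
      finally show ?thesis .
    qed
    then have "real ((n+1)^2) \<le> real ((2*n+1)^p)" by (simp only: of_nat_le_iff)
    then have "real (n+1)^2 \<le> real (2*n+1)^p" by (simp only: of_nat_power)
    then show "norm (1 / real (2*n+1)^p) \<le> 1 / real (n+1)^2"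
      by (simp del: of_nat_Suc of_nat_add) (rule recip_mono[where c=1, simplified]; auto)
  qed
qed

lemma partA: "(dlambda 3)^2 = 3/8 * sigma 5 1 + 3/8 * sigma 4 2 + 1/4 * sigma 3 3"
proof -
  have e: "dlambda 3 = (\<Sum>k. xx k)"
    unfolding dlambda_def xx_def by (simp add: algebra_simps)
  have sx: "summable (\<lambda>k. norm (xx k))"
    using lam_summable_gen[of 3] by (simp add: xx_def)
  have "(dlambda 3)^2 = (\<Sum>n. \<Sum>i\<le>n. xx i * xx (n-i))"
    unfolding e power2_eq_square by (rule Cauchy_product[OF sx sx])
  also have "\<dots> = (\<Sum>n. \<Sum>k\<le>n. 3/8 * FF 5 1 (n,k) + 3/8 * FF 4 2 (n,k) + 1/4 * FF 3 3 (n,k))"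
    by (simp only: xx_inner)
  finally have A: "(dlambda 3)^2 = (\<Sum>n. \<Sum>k\<le>n. 3/8 * FF 5 1 (n,k) + 3/8 * FF 4 2 (n,k) + 1/4 * FF 3 3 (n,k))" .
  have h: "(FF s t has_sum sigma s t) PP" if "2 \<le> s" "2 \<le> t \<or> 4 \<le> s" for s t
    unfolding sigma_eq[OF that] using summable_FF[OF that] by (rule has_sum_infsum)
  have H: "((\<lambda>x. 3/8 * FF 5 1 x + 3/8 * FF 4 2 x + 1/4 * FF 3 3 x) has_sum
     (3/8 * sigma 5 1 + 3/8 * sigma 4 2 + 1/4 * sigma 3 3)) PP"
    by (intro has_sum_add has_sum_cmult_right h) auto
  have "(\<lambda>n. \<Sum>k\<le>n. 3/8 * FF 5 1 (n,k) + 3/8 * FF 4 2 (n,k) + 1/4 * FF 3 3 (n,k)) sums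
        infsum (\<lambda>x. 3/8 * FF 5 1 x + 3/8 * FF 4 2 x + 1/4 * FF 3 3 x) PP"
    using PP_sums[OF has_sum_imp_summable[OF H]] by simp
  also have "infsum (\<lambda>x. 3/8 * FF 5 1 x + 3/8 * FF 4 2 x + 1/4 * FF 3 3 x) PP =
     3/8 * sigma 5 1 + 3/8 * sigma 4 2 + 1/4 * sigma 3 3"
    using H by (rule infsumI)
  finally show ?thesis unfolding A by (rule sums_unique[symmetric])
qed

theorem mainTheorem19:
  shows "sigma 3 3 + 3 * sigma 2 4 = 15 * dlambda 6 - 8 * (dlambda 3)^2"
  using partA partB by linarith

end
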